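(* Let $Z$ be a smooth $3$-dimensional toric variety whose fan contains two maximal cones $\mathrm{cone}(v_1,v_2,v_+)$ and $\mathrm{cone}(v_1,v_2,v_-)$ with $v_1,v_2,v_\pm$ primitive and $v_++v_-=x_1v_1+x_2v_2$, where $x_1,x_2$ are integers with $x_1\ge x_2\ge 0$. Suppose moreover that $x_1\ge 2$. Then the anticanonical bundle of any toric variety obtained from $Z$ by a sequence of blow-ups along torus-invariant subvarieties is not ample.
   Context: Toric varieties are for a 3-dimensional torus $S$, fans in $\chi_*(S)_{\mathbb{R}}$. A blow-up along a torus-invariant subvariety (orbit closure, corresponding to a cone $\tau$ of dimension $\ge2$) of a smooth toric variety is the toric variety obtained by star subdivision of the fan at the sum of the primitive generators of $\tau$. *)

theory Defs
  imports "HOL-Analysis.Analysis"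
begin

text \<open>Lattice N = Z^3 of one-parameter subgroups of the 3-dimensional torus S.
  A smooth fan is encoded combinatorially: each cone is represented by the
  finite set of primitive generators of its rays.\<close>

type_synonym lat = "int ^ 3"

definition primitive :: "lat \<Rightarrow> bool" where
  "primitive v \<longleftrightarrow> (\<forall>d::int. (\<forall>i. d dvd v $ i) \<longrightarrow> is_unit d)"

definition emb :: "lat \<Rightarrow> real ^ 3" where
  "emb v = (\<chi> i. real_of_int (v $ i))"

definition pos_cone :: "lat set \<Rightarrow> (real ^ 3) set" where
  "pos_cone S = {\<Sum>v\<in>S. c v *\<^sub>R emb v | c. \<forall>v\<in>S. 0 \<le> c v}"

definition unimodular :: "lat set \<Rightarrow> bool" where
  "unimodular S \<longleftrightarrow> (\<exists>B. S \<subseteq> B \<and> finite B \<and> card B = 3 \<and>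
      (\<forall>w::lat. \<exists>c::lat \<Rightarrow> int. w = (\<Sum>v\<in>B. c v *s v)))"

definition smooth_fan :: "lat set set \<Rightarrow> bool" where
  "smooth_fan \<Sigma> \<longleftrightarrow>
     finite \<Sigma> \<and> {} \<in> \<Sigma> \<and>
     (\<forall>S\<in>\<Sigma>. finite S \<and> (\<forall>v\<in>S. primitive v) \<and> unimodular S) \<and>
     (\<forall>S\<in>\<Sigma>. \<forall>T. T \<subseteq> S \<longrightarrow> T \<in> \<Sigma>) \<and>
     (\<forall>S\<in>\<Sigma>. \<forall>T\<in>\<Sigma>. pos_cone S \<inter> pos_cone T = pos_cone (S \<inter> T))"

definition star_subdivision :: "lat set set \<Rightarrow> lat set \<Rightarrow> lat set set" where
  "star_subdivision \<Sigma> \<tau> =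
     {S\<in>\<Sigma>. \<not> \<tau> \<subseteq> S} \<union>
     {insert (\<Sum>\<tau>) S | S. S \<in> \<Sigma> \<and> \<not> \<tau> \<subseteq> S \<and> S \<union> \<tau> \<in> \<Sigma>}"

definition toric_blowup :: "lat set set \<Rightarrow> lat set set \<Rightarrow> bool" where
  "toric_blowup \<Sigma> \<Sigma>' \<longleftrightarrow>
     (\<exists>\<tau>\<in>\<Sigma>. 2 \<le> card \<tau> \<and> \<Sigma>' = star_subdivision \<Sigma> \<tau>)"

definition pair :: "real ^ 3 \<Rightarrow> lat \<Rightarrow> real" where
  "pair m u = (\<Sum>i\<in>UNIV. m $ i * real_of_int (u $ i))"

text \<open>Ampleness of the anticanonical divisor -K = sum of all torus-invariant prime
  divisors D_\<rho>: for every cone \<sigma> there is m_\<sigma> with m_\<sigma>(u_\<rho>) = 1 on the rays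
  of \<sigma> and m_\<sigma>(u_\<rho>) < 1 on all other rays (strict convexity of the support
  function / existence of a section of a multiple of -K whose non-vanishing locus
  is the affine open U_\<sigma>).\<close>
definition anticanonical_ample :: "lat set set \<Rightarrow> bool" where
  "anticanonical_ample \<Sigma> \<longleftrightarrow>
     (\<forall>\<sigma>\<in>\<Sigma>. \<exists>m::real^3. (\<forall>u\<in>\<sigma>. pair m u = 1) \<and>
                      (\<forall>u\<in>\<Union>\<Sigma> - \<sigma>. pair m u < 1))"

end

theory Submission
  imports Defs
begin


lemma emb_add: "emb (a + b) = emb a + emb b"
  by (simp add: emb_def vec_eq_iff)
lemma emb_smult: "emb (k *s a) = real_of_int k *\<^sub>R emb a"
  by (simp add: emb_def vec_eq_iff)
lemma emb_zero: "emb 0 = 0"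
  by (simp add: emb_def vec_eq_iff)
lemma emb_inj: "emb a = emb b \<Longrightarrow> a = b"
  by (simp add: emb_def vec_eq_iff)
lemma emb_axis: "emb (axis i 1) = axis i 1"
  by (simp add: emb_def vec_eq_iff axis_def)

lemma indep3:
  fixes v1 v2 v3 :: lat
  assumes card: "card {v1, v2, v3} = 3"
    and sp: "\<And>w::lat. \<exists>c1 c2 c3. w = c1 *s v1 + c2 *s v2 + c3 *s v3"
    and rel: "a *s v1 + b *s v2 + d *s v3 = 0"
  shows "a = 0 \<and> b = 0 \<and> d = 0"
proof -
  have d12: "v1 \<noteq> v2" "v1 \<noteq> v3" "v2 \<noteq> v3" using card by (auto simp: card_insert_if split: if_splits)
  define S where "S = {emb v1, emb v2, emb v3}"
  have e12: "emb v1 \<noteq> emb v2" "emb v1 \<noteq> emb v3" "emb v2 \<noteq> emb v3"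
    using d12 emb_inj by metis+
  have cS: "card S = 3" using e12 by (simp add: S_def)
  have fS: "finite S" by (simp add: S_def)
  have "axis i 1 \<in> span S" for i :: 3
  proof -
    obtain c1 c2 c3 where "axis i (1::int) = c1 *s v1 + c2 *s v2 + c3 *s v3" using sp by blast
    then have "axis i (1::real) = real_of_int c1 *\<^sub>R emb v1 + real_of_int c2 *\<^sub>R emb v2 + real_of_int c3 *\<^sub>R emb v3"
      by (metis emb_add emb_smult emb_axis)
    also have "\<dots> \<in> span S" by (intro span_add span_scale span_base) (auto simp: S_def)
    finally show ?thesis .
  qed
  then have "(Basis :: (real^3) set) \<subseteq> span S" by (auto simp: Basis_vec_def)
  then have "span Basis \<subseteq> span S" by (rule span_minimal[OF _ subspace_span])
  then have "UNIV \<subseteq> span S" by (simp add: span_Basis)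
  then have ind: "independent S" using card_eq_dim[of S UNIV] cS fS by simp
  define u where "u = (\<lambda>x. if x = emb v1 then real_of_int a else if x = emb v2 then real_of_int b else real_of_int d)"
  have "(\<Sum>v\<in>S. u v *\<^sub>R v) = real_of_int a *\<^sub>R emb v1 + real_of_int b *\<^sub>R emb v2 + real_of_int d *\<^sub>R emb v3"
    using e12 by (simp add: S_def u_def)
  also have "\<dots> = emb (a *s v1 + b *s v2 + d *s v3)" by (simp add: emb_add emb_smult)
  also have "\<dots> = 0" using rel emb_zero by simp
  finally have "\<forall>v\<in>S. u v = 0" using ind independent_explicit by blast
  then show ?thesis using e12 by (auto simp: S_def u_def)
qed


definition Qc :: "lat \<Rightarrow> lat \<Rightarrow> lat set" where
  "Qc v1 v2 = {a *s v1 + b *s v2 | a b. 0 \<le> a \<and> 0 \<le> b}"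

definition repr :: "lat set set \<Rightarrow> lat set \<Rightarrow> lat \<Rightarrow> bool" where
  "repr S Q y \<longleftrightarrow> (\<exists>\<rho>\<in>S. finite \<rho> \<and> \<rho> \<subseteq> Q \<and>
     (\<exists>c. (\<forall>u. 0 \<le> c u) \<and> (\<forall>u. u \<notin> \<rho> \<longrightarrow> c u = 0) \<and> y = (\<Sum>u\<in>\<rho>. c u *s u)))"

lemma Qc_sum:
  assumes "finite A" "A \<subseteq> Qc v1 v2" shows "\<Sum>A \<in> Qc v1 v2"
  using assms
proof (induction A rule: finite_induct)
  case empty
  have "(0::lat) = 0 *s v1 + 0 *s v2" by (simp add: vec_eq_iff)
  then show ?case unfolding Qc_def by force
next
  case (insert x F)
  then obtain a b where ab: "0 \<le> a" "0 \<le> b" "x = a *s v1 + b *s v2" by (auto simp: Qc_def)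
  from insert obtain a' b' where ab': "0 \<le> a'" "0 \<le> b'" "\<Sum>F = a' *s v1 + b' *s v2" by (auto simp: Qc_def)
  have "\<Sum>(insert x F) = x + \<Sum>F" using insert.hyps by simp
  also have "\<dots> = (a + a') *s v1 + (b + b') *s v2"
    using ab ab' by (simp add: vec_eq_iff algebra_simps)
  finally have "\<Sum>(insert x F) = (a + a') *s v1 + (b + b') *s v2" .
  then show ?case unfolding Qc_def using ab ab'
    by (intro CollectI exI[of _ "a + a'"] exI[of _ "b + b'"]) simp
qed

lemma star_subset_closed:
  assumes "\<forall>S\<in>\<Sigma>. \<forall>T. T \<subseteq> S \<longrightarrow> T \<in> \<Sigma>"
  shows "\<forall>S\<in>star_subdivision \<Sigma> \<tau>. \<forall>T. T \<subseteq> S \<longrightarrow> T \<in> star_subdivision \<Sigma> \<tau>"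
proof (intro ballI allI impI)
  fix S T assume S: "S \<in> star_subdivision \<Sigma> \<tau>" and T: "T \<subseteq> S"
  show "T \<in> star_subdivision \<Sigma> \<tau>"
  proof (cases "S \<in> \<Sigma> \<and> \<not> \<tau> \<subseteq> S")
    case True then show ?thesis using T assms unfolding star_subdivision_def by blast
  next
    case False
    then obtain S0 where S0: "S = insert (\<Sum>\<tau>) S0" "S0 \<in> \<Sigma>" "\<not> \<tau> \<subseteq> S0" "S0 \<union> \<tau> \<in> \<Sigma>"
      using S unfolding star_subdivision_def by blast
    show ?thesis
    proof (cases "\<Sum>\<tau> \<in> T")
      case True
      have "T = insert (\<Sum>\<tau>) (T - {\<Sum>\<tau>})" using True by blast
      moreover have "T - {\<Sum>\<tau>} \<subseteq> S0" using T S0 by blast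
      moreover have "T - {\<Sum>\<tau>} \<union> \<tau> \<in> \<Sigma>" using assms S0 \<open>T - {\<Sum>\<tau>} \<subseteq> S0\<close>
        by (meson Un_mono order_refl)
      moreover have "T - {\<Sum>\<tau>} \<in> \<Sigma>" using assms S0 \<open>T - {\<Sum>\<tau>} \<subseteq> S0\<close> by blast
      moreover have "\<not> \<tau> \<subseteq> T - {\<Sum>\<tau>}" using S0 \<open>T - {\<Sum>\<tau>} \<subseteq> S0\<close> by blast
      ultimately show ?thesis unfolding star_subdivision_def by blast
    next
      case False
      then have "T \<subseteq> S0" using T S0 by blast
      then show ?thesis using assms S0 unfolding star_subdivision_def by blast
    qed
  qed
qed

lemma star_single:
  assumes "{u} \<in> \<Sigma>" "2 \<le> card \<tau>" shows "{u} \<in> star_subdivision \<Sigma> \<tau>"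
proof -
  have "\<not> \<tau> \<subseteq> {u}"
  proof
    assume "\<tau> \<subseteq> {u}"
    then have "card \<tau> \<le> card {u}" by (intro card_mono) auto
    then show False using assms by simp
  qed
  then show ?thesis using assms unfolding star_subdivision_def by blast
qed

lemma reprI:
  assumes "\<rho> \<in> S" "finite \<rho>" "\<rho> \<subseteq> Q" "\<forall>u. 0 \<le> c u" "\<forall>u. u \<notin> \<rho> \<longrightarrow> c u = 0"
    "y = (\<Sum>u\<in>\<rho>. c u *s u)"
  shows "repr S Q y"
  unfolding repr_def by (intro bexI[of _ \<rho>] conjI exI[of _ c]; fact assms)

lemma starI1: "S \<in> \<Sigma> \<Longrightarrow> \<not> \<tau> \<subseteq> S \<Longrightarrow> S \<in> star_subdivision \<Sigma> \<tau>"
  unfolding star_subdivision_def by (rule UnI1, rule CollectI) simp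

lemma starI2: "S \<in> \<Sigma> \<Longrightarrow> \<not> \<tau> \<subseteq> S \<Longrightarrow> S \<union> \<tau> \<in> \<Sigma> \<Longrightarrow> insert (\<Sum>\<tau>) S \<in> star_subdivision \<Sigma> \<tau>"
  unfolding star_subdivision_def by (rule UnI2, rule CollectI, rule exI[of _ S]) simp

lemma repr_step:
  assumes r: "repr \<Sigma> Q y" and tau: "\<tau> \<in> \<Sigma>" "2 \<le> card \<tau>"
    and sc: "\<forall>S\<in>\<Sigma>. \<forall>T. T \<subseteq> S \<longrightarrow> T \<in> \<Sigma>"
    and Qs: "\<And>A. finite A \<Longrightarrow> A \<subseteq> Q \<Longrightarrow> \<Sum>A \<in> Q"
  shows "repr (star_subdivision \<Sigma> \<tau>) Q y"
proof -
  obtain \<rho> c where \<rho>: "\<rho> \<in> \<Sigma>" "finite \<rho>" "\<rho> \<subseteq> Q" and c: "\<forall>u. 0 \<le> c u" "\<forall>u. u \<notin> \<rho> \<longrightarrow> c u = 0"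
    and y: "y = (\<Sum>u\<in>\<rho>. c u *s u)"
    using r unfolding repr_def by blast
  show ?thesis
  proof (cases "\<tau> \<subseteq> \<rho>")
    case False
    then have "\<rho> \<in> star_subdivision \<Sigma> \<tau>" using \<rho> by (intro starI1)
    from reprI[OF this \<rho>(2,3) c y] show ?thesis .
  next
    case True
    have "card \<tau> \<noteq> 0" using tau(2) by simp
    then have ft: "finite \<tau>" "\<tau> \<noteq> {}" by (meson card.infinite, metis card.empty)
    obtain u0 where u0: "u0 \<in> \<tau>" "\<forall>u\<in>\<tau>. c u0 \<le> c u"
    proof -
      have "Min (c ` \<tau>) \<in> c ` \<tau>" using ft by simp
      then obtain u0 where "u0 \<in> \<tau>" "c u0 = Min (c ` \<tau>)" by auto
      moreover have "\<forall>u\<in>\<tau>. Min (c ` \<tau>) \<le> c u" using ft by simp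
      ultimately show ?thesis using that by auto
    qed
    define w where "w = \<Sum>\<tau>"
    define c0 where "c0 = c u0"
    define c' where "c' = (\<lambda>u. c u - (if u \<in> \<tau> then c0 else 0) + (if u = w then c0 else 0))"
    define \<rho>' where "\<rho>' = insert w (\<rho> - {u0})"
    have S1: "\<rho> - {u0} \<in> \<Sigma>" using sc \<rho> by blast
    have S2: "\<not> \<tau> \<subseteq> \<rho> - {u0}" using u0 by blast
    have S3: "(\<rho> - {u0}) \<union> \<tau> = \<rho>" using True u0 by blast
    have mem: "\<rho>' \<in> star_subdivision \<Sigma> \<tau>"
      unfolding \<rho>'_def w_def using S1 S2 S3 \<rho>(1) by (intro starI2) simp_all
    have fin: "finite \<rho>'" using \<rho> by (simp add: \<rho>'_def)
    have wQ: "w \<in> Q" unfolding w_def by (rule Qs[OF ft(1)]) (use True \<rho>(3) in blast)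
    have sub: "\<rho>' \<subseteq> Q" using wQ \<rho>(3) by (auto simp: \<rho>'_def)
    have c0: "0 \<le> c0" using c by (simp add: c0_def)
    have nn: "\<forall>u. 0 \<le> c' u"
      using c u0 c0 by (auto simp: c'_def c0_def)
    have zero: "\<forall>u. u \<notin> \<rho>' \<longrightarrow> c' u = 0"
    proof (intro allI impI)
      fix u assume "u \<notin> \<rho>'"
      then have "u \<noteq> w" "u \<notin> \<rho> \<or> u = u0" by (auto simp: \<rho>'_def)
      then show "c' u = 0" using c True u0 by (auto simp: c'_def c0_def)
    qed
    define F where "F = insert w \<rho>"
    have fF: "finite F" using \<rho> by (simp add: F_def)
    have sumF: "(\<Sum>u\<in>\<rho>'. c' u *s u) = (\<Sum>u\<in>F. c' u *s u)"
      by (rule sum.mono_neutral_left) (use fF zero in \<open>auto simp: F_def \<rho>'_def\<close>)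
    have yF: "y = (\<Sum>u\<in>F. c u *s u)"
      unfolding y by (rule sum.mono_neutral_left) (use fF c in \<open>auto simp: F_def\<close>)
    have tF: "\<tau> \<subseteq> F" "w \<in> F" using True by (auto simp: F_def)
    have "(\<Sum>u\<in>F. c' u *s u) = y"
    proof (subst vec_eq_iff, intro allI)
      fix i
      have A: "(\<Sum>u\<in>F. (if u \<in> \<tau> then c0 else 0) * u $ i) = c0 * w $ i"
      proof -
        have "(\<Sum>u\<in>F. (if u \<in> \<tau> then c0 else 0) * u $ i) = (\<Sum>u\<in>F. if u \<in> \<tau> then c0 * u $ i else 0)"
          by (rule sum.cong) auto
        also have "\<dots> = (\<Sum>u\<in>F \<inter> \<tau>. c0 * u $ i)" using fF by (simp add: sum.inter_restrict)
        also have "F \<inter> \<tau> = \<tau>" using tF by blast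
        finally show ?thesis by (simp add: w_def sum_distrib_left)
      qed
      have B: "(\<Sum>u\<in>F. (if u = w then c0 else 0) * u $ i) = c0 * w $ i"
      proof -
        have "(\<Sum>u\<in>F. (if u = w then c0 else 0) * u $ i) = (\<Sum>u\<in>F. if u = w then c0 * w $ i else 0)"
          by (rule sum.cong) auto
        also have "\<dots> = c0 * w $ i" using fF tF by (simp add: sum.delta)
        finally show ?thesis .
      qed
      have "(\<Sum>u\<in>F. c' u *s u) $ i = (\<Sum>u\<in>F. c u * u $ i) - (\<Sum>u\<in>F. (if u \<in> \<tau> then c0 else 0) * u $ i) + (\<Sum>u\<in>F. (if u = w then c0 else 0) * u $ i)"
        by (simp add: c'_def algebra_simps sum.distrib sum_subtractf)
      also have "\<dots> = (\<Sum>u\<in>F. c u * u $ i)" using A B by simp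
      also have "\<dots> = y $ i" using yF by simp
      finally show "(\<Sum>u\<in>F. c' u *s u) $ i = y $ i" .
    qed
    then have "y = (\<Sum>u\<in>\<rho>'. c' u *s u)" using sumF by simp
    then show ?thesis using mem fin sub nn zero by (intro reprI[of \<rho>' _ _ c']) simp_all
  qed
qed

lemma pair_add: "pair m (a + b) = pair m a + pair m b"
  by (simp add: pair_def algebra_simps sum.distrib)
lemma pair_smult: "pair m (k *s a) = real_of_int k * pair m a"
  by (simp add: pair_def algebra_simps sum_distrib_left)
lemma pair_sum:
  assumes "finite A"
  shows "pair m (\<Sum>u\<in>A. c u *s u) = (\<Sum>u\<in>A. real_of_int (c u) * pair m u)"
  using assms by (induction A rule: finite_induct) (simp_all add: pair_add pair_smult, simp add: pair_def)

lemma repr_sum_one: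
  fixes c :: "lat \<Rightarrow> int"
  assumes "finite \<rho>" "\<forall>u. 0 \<le> c u" "(\<Sum>u\<in>\<rho>. c u) = 1"
  shows "(\<Sum>u\<in>\<rho>. c u *s u) \<in> \<rho>"
proof -
  obtain u where u: "u \<in> \<rho>" "c u \<noteq> 0"
    using assms(3) by (metis sum.neutral zero_neq_one)
  have split: "(\<Sum>u\<in>\<rho>. c u) = c u + (\<Sum>v\<in>\<rho> - {u}. c v)" using assms(1) u(1) by (simp add: sum.remove)
  have "0 \<le> (\<Sum>v\<in>\<rho> - {u}. c v)" using assms(2) by (simp add: sum_nonneg)
  moreover have "1 \<le> c u" using u assms(2) by (metis int_one_le_iff_zero_less order_le_less)
  ultimately have cu: "c u = 1" and rest: "(\<Sum>v\<in>\<rho> - {u}. c v) = 0" using split assms(3) by linarith+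
  have "\<forall>v\<in>\<rho> - {u}. c v = 0" using rest assms by (simp add: sum_nonneg_eq_0_iff)
  then have "(\<Sum>v\<in>\<rho> - {u}. c v *s v) = 0" by simp
  moreover have "(\<Sum>v\<in>\<rho>. c v *s v) = c u *s u + (\<Sum>v\<in>\<rho> - {u}. c v *s v)"
    using assms(1) u(1) by (simp add: sum.remove)
  ultimately have "(\<Sum>v\<in>\<rho>. c v *s v) = u" using cu by (simp add: vec_eq_iff)
  then show ?thesis using u by simp
qed

lemma repr_sum_zero:
  fixes c :: "lat \<Rightarrow> int"
  assumes "finite \<rho>" "\<forall>u. 0 \<le> c u" "(\<Sum>u\<in>\<rho>. c u) = 0"
  shows "(\<Sum>u\<in>\<rho>. c u *s u) = 0"
proof -
  have "\<forall>v\<in>\<rho>. c v = 0" using assms by (simp add: sum_nonneg_eq_0_iff)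
  then show ?thesis by simp
qed


lemma aux_le: "(a::real) = b + c \<Longrightarrow> b \<le> 1 \<Longrightarrow> c \<le> d \<Longrightarrow> a \<le> 1 + d" by linarith
lemma aux_lt: "(a::real) < 1 \<Longrightarrow> (x::real) = a + c \<Longrightarrow> 0 < k \<Longrightarrow> c < k \<Longrightarrow> x = k + 1 \<Longrightarrow> False" by linarith

theorem lemma4p1:
  fixes \<Sigma> :: "lat set set" and v1 v2 vp vm :: lat and x1 x2 :: int
  assumes "smooth_fan \<Sigma>"
    and "{v1, v2, vp} \<in> \<Sigma>" and "card {v1, v2, vp} = 3"
    and "{v1, v2, vm} \<in> \<Sigma>" and "card {v1, v2, vm} = 3"
    and "vp \<noteq> vm"
    and "vp + vm = x1 *s v1 + x2 *s v2"
    and "x1 \<ge> x2" and "x2 \<ge> 0" and "x1 \<ge> 2"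
    and "toric_blowup\<^sup>*\<^sup>* \<Sigma> \<Sigma>'"
  shows "\<not> anticanonical_ample \<Sigma>'"
proof
  assume amp: "anticanonical_ample \<Sigma>'"
  note sf = assms(1)[unfolded smooth_fan_def]
  note sf3 = sf[THEN conjunct2, THEN conjunct2, THEN conjunct1]
  note sf4 = sf[THEN conjunct2, THEN conjunct2, THEN conjunct2, THEN conjunct1]
  define Q where "Q = Qc v1 v2"
  have Qs: "\<And>A. finite A \<Longrightarrow> A \<subseteq> Q \<Longrightarrow> \<Sum>A \<in> Q" unfolding Q_def by (rule Qc_sum)
  have d12: "v1 \<noteq> v2" "v1 \<noteq> vp" "v2 \<noteq> vp" using assms(3) by (auto simp: card_insert_if split: if_splits)
  have unim: "unimodular {v1, v2, vp}" using sf3 assms(2) by blast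
  then obtain B where B: "{v1, v2, vp} \<subseteq> B" "finite B" "card B = 3"
    "\<forall>w::lat. \<exists>c::lat \<Rightarrow> int. w = (\<Sum>v\<in>B. c v *s v)"
    unfolding unimodular_def by blast
  have BB: "B = {v1, v2, vp}" using card_subset_eq[OF B(2) B(1)] B(3) assms(3) by simp
  have sp: "\<And>w::lat. \<exists>c1 c2 c3. w = c1 *s v1 + c2 *s v2 + c3 *s vp"
  proof -
    fix w :: lat
    obtain c where "w = (\<Sum>v\<in>B. c v *s v)" using B(4) by blast
    then have "w = c v1 *s v1 + c v2 *s v2 + c vp *s vp" using d12 by (simp add: BB)
    then show "\<exists>c1 c2 c3. w = c1 *s v1 + c2 *s v2 + c3 *s vp" by blast
  qed
  have indep: "\<And>a b d. a *s v1 + b *s v2 + d *s vp = 0 \<Longrightarrow> a = 0 \<and> b = 0 \<and> d = 0"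
    using indep3[OF assms(3) sp] by blast
  have vpQ: "vp \<notin> Q"
  proof
    assume "vp \<in> Q"
    then obtain a b where "vp = a *s v1 + b *s v2" by (auto simp: Q_def Qc_def)
    then have "a *s v1 + b *s v2 + (-1) *s vp = 0" by (simp add: vec_eq_iff)
    from indep[OF this] show False by simp
  qed
  have vmQ: "vm \<notin> Q"
  proof
    assume "vm \<in> Q"
    then obtain a b where "vm = a *s v1 + b *s v2" by (auto simp: Q_def Qc_def)
    then have "(x1 - a) *s v1 + (x2 - b) *s v2 + (-1) *s vp = 0"
    proof -
      have "vp = (x1 *s v1 + x2 *s v2) - vm" using assms(7) by (simp add: eq_diff_eq)
      then show ?thesis using \<open>vm = a *s v1 + b *s v2\<close> by (simp add: vec_eq_iff algebra_simps)
    qed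
    from indep[OF this] show False by simp
  qed
  define Inv where "Inv = (\<lambda>S. (\<forall>A\<in>S. \<forall>T. T \<subseteq> A \<longrightarrow> T \<in> S) \<and> {v1} \<in> S \<and> {v2} \<in> S \<and> {vp} \<in> S \<and> {vm} \<in> S
       \<and> (\<forall>y\<in>Q. repr S Q y))"
  have baseI: "Inv \<Sigma>"
  proof -
    have sc: "\<forall>A\<in>\<Sigma>. \<forall>T. T \<subseteq> A \<longrightarrow> T \<in> \<Sigma>" by (rule sf4)
    have s1: "{v1} \<in> \<Sigma>" by (rule sc[rule_format, OF assms(2)]) simp
    have s2: "{v2} \<in> \<Sigma>" by (rule sc[rule_format, OF assms(2)]) simp
    have s3: "{vp} \<in> \<Sigma>" by (rule sc[rule_format, OF assms(2)]) simp
    have s4: "{vm} \<in> \<Sigma>" by (rule sc[rule_format, OF assms(4)]) simp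
    have s5: "{v1, v2} \<in> \<Sigma>" by (rule sc[rule_format, OF assms(2)]) auto
    note singles = s1 s2 s3 s4 s5
    have rb: "repr \<Sigma> Q y" if yQ0: "y \<in> Q" for y
    proof -
      obtain a b where ab: "0 \<le> a" "0 \<le> b" "y = a *s v1 + b *s v2" using yQ0 by (auto simp: Q_def Qc_def)
      define c where "c = (\<lambda>u. if u = v1 then a else if u = v2 then b else 0)"
      have yy: "y = (\<Sum>u\<in>{v1, v2}. c u *s u)" using d12 ab by (simp add: c_def)
      have sub: "{v1, v2} \<subseteq> Q"
      proof -
        have "v1 \<in> Qc v1 v2" unfolding Qc_def
          by (intro CollectI exI[of _ 1] exI[of _ 0]) (simp add: vec_eq_iff)
        moreover have "v2 \<in> Qc v1 v2" unfolding Qc_def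
          by (intro CollectI exI[of _ 0] exI[of _ 1]) (simp add: vec_eq_iff)
        ultimately show ?thesis unfolding Q_def by simp
      qed
      have cn: "\<forall>u. 0 \<le> c u" "\<forall>u. u \<notin> {v1, v2} \<longrightarrow> c u = 0" using ab by (auto simp: c_def)
      show ?thesis unfolding repr_def
        by (rule bexI[OF _ singles(5)], intro conjI exI[of _ c]) (fact yy sub cn | simp)+
    qed
    then have rb': "\<forall>y\<in>Q. repr \<Sigma> Q y" by blast
    show ?thesis unfolding Inv_def by (intro conjI; fact sc s1 s2 s3 s4 rb')
  qed
  have stepI: "Inv S2" if h1: "Inv S1" and h2: "toric_blowup S1 S2" for S1 S2
  proof -
    obtain \<tau> where tau: "\<tau> \<in> S1" "2 \<le> card \<tau>" "S2 = star_subdivision S1 \<tau>"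
      using h2 unfolding toric_blowup_def by blast
    note hh = h1[unfolded Inv_def]
    have sc: "\<forall>A\<in>S1. \<forall>T. T \<subseteq> A \<longrightarrow> T \<in> S1" using hh by (rule conjunct1)
    have i1: "{v1} \<in> S1" "{v2} \<in> S1" "{vp} \<in> S1" "{vm} \<in> S1" "\<forall>y\<in>Q. repr S1 Q y"
      using hh by simp_all
    show ?thesis unfolding Inv_def tau(3)
    proof (intro conjI)
      show "\<forall>A\<in>star_subdivision S1 \<tau>. \<forall>T. T \<subseteq> A \<longrightarrow> T \<in> star_subdivision S1 \<tau>"
        by (rule star_subset_closed[OF sc])
      show "{v1} \<in> star_subdivision S1 \<tau>" by (rule star_single[OF i1(1) tau(2)])
      show "{v2} \<in> star_subdivision S1 \<tau>" by (rule star_single[OF i1(2) tau(2)])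
      show "{vp} \<in> star_subdivision S1 \<tau>" by (rule star_single[OF i1(3) tau(2)])
      show "{vm} \<in> star_subdivision S1 \<tau>" by (rule star_single[OF i1(4) tau(2)])
      show "\<forall>y\<in>Q. repr (star_subdivision S1 \<tau>) Q y"
        using repr_step[OF _ tau(1) tau(2) sc Qs] i1(5) by blast
    qed
  qed
  have inv: "Inv \<Sigma>'" using assms(11)
  proof (induction rule: rtranclp_induct)
    case base then show ?case by (rule baseI)
  next
    case (step a b) then show ?case using stepI by blast
  qed
  note hh' = inv[unfolded Inv_def]
  have sc': "\<forall>A\<in>\<Sigma>'. \<forall>T. T \<subseteq> A \<longrightarrow> T \<in> \<Sigma>'" and sing: "{v1} \<in> \<Sigma>'" "{v2} \<in> \<Sigma>'" "{vp} \<in> \<Sigma>'" "{vm} \<in> \<Sigma>'"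
    and rep: "\<And>y. y \<in> Q \<Longrightarrow> repr \<Sigma>' Q y" using hh' by simp_all
  define R where "R = \<Union>\<Sigma>'"
  have inR: "v1 \<in> R" "v2 \<in> R" "vp \<in> R" "vm \<in> R" using sing by (auto simp: R_def)
  have ampl: "\<And>\<sigma>. \<sigma> \<in> \<Sigma>' \<Longrightarrow> \<exists>m. (\<forall>u\<in>\<sigma>. pair m u = 1) \<and> (\<forall>u\<in>R - \<sigma>. pair m u < 1)"
    using amp unfolding anticanonical_ample_def R_def by blast
  define z where "z = x1 *s v1 + x2 *s v2"
  have zQ: "z \<in> Q" unfolding z_def Q_def Qc_def
    by (intro CollectI exI[of _ x1] exI[of _ x2]) (use assms(9,10) in auto)
  have z0: "z \<noteq> 0"
  proof
    assume "z = 0"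
    then have "x1 *s v1 + x2 *s v2 + 0 *s vp = 0" by (simp add: z_def vec_eq_iff)
    from indep[OF this] show False using assms(10) by simp
  qed
  have zR: "z \<in> R"
  proof -
    obtain \<rho> c where \<rho>: "\<rho> \<in> \<Sigma>'" "finite \<rho>" "\<rho> \<subseteq> Q" and c: "\<forall>u. 0 \<le> c u" and zs: "z = (\<Sum>u\<in>\<rho>. c u *s u)"
      using rep[OF zQ] unfolding repr_def by blast
    obtain m where m: "\<forall>u\<in>\<rho>. pair m u = 1" "\<forall>u\<in>R - \<rho>. pair m u < 1" using ampl[OF \<rho>(1)] by blast
    have "pair m z = (\<Sum>u\<in>\<rho>. real_of_int (c u) * pair m u)" using zs pair_sum[OF \<rho>(2)] by simp
    also have "\<dots> = real_of_int (\<Sum>u\<in>\<rho>. c u)" using m(1) by simp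
    finally have pz: "pair m z = real_of_int (\<Sum>u\<in>\<rho>. c u)" .
    have "pair m z = pair m vp + pair m vm" using assms(7) by (simp add: z_def pair_add[symmetric])
    moreover have "pair m vp < 1" "pair m vm < 1" using m(2) inR vpQ vmQ \<rho>(3) by blast+
    ultimately have "(\<Sum>u\<in>\<rho>. c u) < 2" using pz by linarith
    moreover have "(\<Sum>u\<in>\<rho>. c u) \<noteq> 0" using repr_sum_zero[OF \<rho>(2) c] zs z0 by auto
    moreover have "0 \<le> (\<Sum>u\<in>\<rho>. c u)" using c by (simp add: sum_nonneg)
    ultimately have "(\<Sum>u\<in>\<rho>. c u) = 1" by linarith
    then have "z \<in> \<rho>" using repr_sum_one[OF \<rho>(2) c] zs by simp
    then show ?thesis using \<rho>(1) by (auto simp: R_def)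
  qed
  show False
  proof (cases "x2 = 0")
    case True
    obtain m where m: "\<forall>u\<in>{v1}. pair m u = 1" "\<forall>u\<in>R - {v1}. pair m u < 1" using ampl[OF sing(1)] by blast
    have "z \<noteq> v1"
    proof
      assume "z = v1"
      then have "(x1 - 1) *s v1 + x2 *s v2 + 0 *s vp = 0" by (simp add: z_def vec_eq_iff algebra_simps)
      from indep[OF this] show False using assms(10) by simp
    qed
    then have "pair m z < 1" using m zR by blast
    moreover have "pair m z = real_of_int x1" using m True by (simp add: z_def pair_add pair_smult)
    ultimately show False using assms(10) by linarith
  next
    case False
    define y where "y = v1 + v2"
    have yQ: "y \<in> Q" unfolding y_def Q_def Qc_def
      by (rule CollectI, rule exI[of _ 1], rule exI[of _ 1]) (simp add: vec_eq_iff)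
    obtain \<rho> c where \<rho>: "\<rho> \<in> \<Sigma>'" "finite \<rho>" "\<rho> \<subseteq> Q" and c: "\<forall>u. 0 \<le> c u" and ys: "y = (\<Sum>u\<in>\<rho>. c u *s u)"
      using rep[OF yQ] unfolding repr_def by blast
    obtain m where m: "\<forall>u\<in>\<rho>. pair m u = 1" "\<forall>u\<in>R - \<rho>. pair m u < 1" using ampl[OF \<rho>(1)] by blast
    have le1: "pair m u \<le> 1" if uR: "u \<in> R" for u
    proof (cases "u \<in> \<rho>")
      case True then show ?thesis using m(1) by simp
    next
      case False
      then have "u \<in> R - \<rho>" using uR by simp
      then have "pair m u < 1" using m(2) by blast
      then show ?thesis by simp
    qed
    define s where "s = (\<Sum>u\<in>\<rho>. c u)"
    have "pair m y = (\<Sum>u\<in>\<rho>. real_of_int (c u) * pair m u)" using ys pair_sum[OF \<rho>(2)] by simp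
    also have "\<dots> = real_of_int s" using m(1) by (simp add: s_def)
    finally have py: "pair m y = real_of_int s" .
    have y0: "y \<noteq> 0"
    proof
      assume "y = 0"
      then have "1 *s v1 + 1 *s v2 + 0 *s vp = 0" by (simp add: y_def vec_eq_iff)
      from indep[OF this] show False by simp
    qed
    have s1: "1 \<le> s"
    proof -
      have "s \<noteq> 0" using repr_sum_zero[OF \<rho>(2) c] ys y0 by (auto simp: s_def)
      moreover have "0 \<le> s" using c by (simp add: s_def sum_nonneg)
      ultimately show ?thesis by linarith
    qed
    have ident: "x1 *s y = z + (x1 - x2) *s v2" by (simp add: y_def z_def vec_eq_iff algebra_simps)
    have lin: "real_of_int x1 * pair mm y = pair mm z + real_of_int (x1 - x2) * pair mm v2" for mm
    proof -
      have "pair mm (x1 *s y) = pair mm z + pair mm ((x1 - x2) *s v2)" unfolding ident by (rule pair_add)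
      then show ?thesis by (simp only: pair_smult)
    qed
    have "real_of_int x1 * real_of_int s = pair m z + real_of_int (x1 - x2) * pair m v2"
      using lin[of m] py by simp
    moreover have "pair m z \<le> 1" using le1 zR by blast
    moreover have "real_of_int (x1 - x2) * pair m v2 \<le> real_of_int (x1 - x2)"
      using mult_left_mono[of "pair m v2" 1 "real_of_int (x1 - x2)"] le1 inR assms(8) by simp
    ultimately have "real_of_int x1 * real_of_int s \<le> 1 + real_of_int (x1 - x2)"
      by (rule aux_le)
    then have "real_of_int (x1 * s) \<le> real_of_int (1 + (x1 - x2))" by simp
    then have ineq: "x1 * s \<le> 1 + (x1 - x2)" by (simp only: of_int_le_iff)
    have "x1 * 1 \<le> x1 * s" using s1 assms(10) by (intro mult_left_mono) auto
    then have "x1 \<le> x1 * s" by simp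
    then have x21: "x2 = 1" using ineq False assms(9) by linarith
    have "s = 1"
    proof (rule ccontr)
      assume "s \<noteq> 1"
      then have "2 \<le> s" using s1 by linarith
      then have "2 * x1 \<le> x1 * s" using assms(10) by (simp add: mult.commute mult_left_mono)
      then show False using ineq x21 assms(10) by linarith
    qed
    then have "y \<in> \<rho>" using repr_sum_one[OF \<rho>(2) c] ys by (simp add: s_def)
    then have ysing: "{y} \<in> \<Sigma>'" using sc'[rule_format, OF \<rho>(1), of "{y}"] by simp
    obtain m' where m': "\<forall>u\<in>{y}. pair m' u = 1" "\<forall>u\<in>R - {y}. pair m' u < 1" using ampl[OF ysing] by blast
    have zy: "z \<noteq> y"
    proof
      assume "z = y"
      then have "z - y = 0" by simp
      then have "(x1 - 1) *s v1 + (x2 - 1) *s v2 + 0 *s vp = 0" unfolding y_def z_def by (simp add: vec_eq_iff algebra_simps)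
      from indep[OF this] show False using assms(10) by simp
    qed
    have v2y: "v2 \<noteq> y"
    proof
      assume "v2 = y"
      then have "v2 - y = 0" by simp
      then have "1 *s v1 + 0 *s v2 + 0 *s vp = 0" unfolding y_def by (simp add: vec_eq_iff)
      from indep[OF this] show False by simp
    qed
    have "z \<in> R - {y}" using zR zy by simp
    then have f1: "pair m' z < 1" using m'(2) by blast
    have "v2 \<in> R - {y}" using inR(2) v2y by simp
    then have f0: "pair m' v2 < 1" using m'(2) by blast
    have py': "pair m' y = 1" using m'(1) by simp
    have f2: "real_of_int x1 = pair m' z + real_of_int (x1 - 1) * pair m' v2"
      using lin[of m'] unfolding py' x21 by simp
    have f3: "0 < real_of_int (x1 - 1)" using assms(10) by simp
    have f4: "real_of_int (x1 - 1) * pair m' v2 < real_of_int (x1 - 1)"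
      using mult_strict_left_mono[OF f0 f3] by (simp only: mult_1_right)
    have f5: "real_of_int x1 = real_of_int (x1 - 1) + 1" by (simp only: of_int_diff of_int_1 diff_add_cancel)
    show False by (rule aux_lt[OF f1 f2 f3 f4 f5])
  qed
qed

end
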